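(* If $\Delta\geq 4$, then the symmetric directed star satisfies $\chi'_{D_2}(\overleftrightarrow{K_{1,\Delta}})=\left\lceil 2\sqrt{\Delta}\right\rceil$.
   Context: For a simple graph $G$, the symmetric digraph $\overleftrightarrow{G}$ is obtained by replacing each edge $uv$ of $G$ by the pair of opposite arcs $\overrightarrow{uv}$ and $\overrightarrow{vu}$. A monochromatic 2-path is a pair of arcs $\overrightarrow{uv},\overrightarrow{vw}$ with $w\neq u$ of the same colour. An arc-colouring is distinguishing if the only automorphism of $\overleftrightarrow{G}$ preserving the colour of every arc is the identity. $\chi'_{D_2}(\overleftrightarrow{G})$ is the least number of colours in a distinguishing arc-colouring of $\overleftrightarrow{G}$ with no monochromatic 2-paths (monochromatic 2-cycles are allowed). *)

theory Defs
  imports Complex_Main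
begin

text \<open>A simple graph is given by a vertex set V and a symmetric irreflexive edge
relation E. The symmetric digraph has an arc (u,v) for every edge uv.\<close>

definition sym_arcs :: "'a set \<Rightarrow> ('a \<Rightarrow> 'a \<Rightarrow> bool) \<Rightarrow> ('a \<times> 'a) set" where
  "sym_arcs V E = {(u, v). u \<in> V \<and> v \<in> V \<and> E u v}"

definition is_digraph_aut :: "'a set \<Rightarrow> ('a \<Rightarrow> 'a \<Rightarrow> bool) \<Rightarrow> ('a \<Rightarrow> 'a) \<Rightarrow> bool" where
  "is_digraph_aut V E \<sigma> \<longleftrightarrow> bij_betw \<sigma> V V \<and>
     (\<forall>u\<in>V. \<forall>v\<in>V. (u, v) \<in> sym_arcs V E \<longleftrightarrow> (\<sigma> u, \<sigma> v) \<in> sym_arcs V E)"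

definition no_mono_2path :: "'a set \<Rightarrow> ('a \<Rightarrow> 'a \<Rightarrow> bool) \<Rightarrow> ('a \<times> 'a \<Rightarrow> nat) \<Rightarrow> bool" where
  "no_mono_2path V E c \<longleftrightarrow>
     (\<forall>u v w. (u, v) \<in> sym_arcs V E \<and> (v, w) \<in> sym_arcs V E \<and> w \<noteq> u \<longrightarrow> c (u, v) \<noteq> c (v, w))"

definition distinguishing_arc_col :: "'a set \<Rightarrow> ('a \<Rightarrow> 'a \<Rightarrow> bool) \<Rightarrow> ('a \<times> 'a \<Rightarrow> nat) \<Rightarrow> bool" where
  "distinguishing_arc_col V E c \<longleftrightarrow>
     (\<forall>\<sigma>. is_digraph_aut V E \<sigma> \<and> (\<forall>a\<in>sym_arcs V E. c (\<sigma> (fst a), \<sigma> (snd a)) = c a)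
          \<longrightarrow> (\<forall>v\<in>V. \<sigma> v = v))"

definition chi_D2 :: "'a set \<Rightarrow> ('a \<Rightarrow> 'a \<Rightarrow> bool) \<Rightarrow> nat" where
  "chi_D2 V E = (LEAST k. \<exists>c :: 'a \<times> 'a \<Rightarrow> nat.
      (\<forall>a\<in>sym_arcs V E. c a < k) \<and> no_mono_2path V E c \<and> distinguishing_arc_col V E c)"

definition star_vertices :: "nat \<Rightarrow> nat set" where
  "star_vertices \<Delta> = {0..\<Delta>}"

definition star_edge :: "nat \<Rightarrow> nat \<Rightarrow> bool" where
  "star_edge u v \<longleftrightarrow> (u = 0 \<and> v \<noteq> 0) \<or> (v = 0 \<and> u \<noteq> 0)"

end

theory Submission
  imports Defs
begin

lemma arcs_eq:
  "(u,v) \<in> sym_arcs {0..D} star_edge \<longleftrightarrow> u \<le> D \<and> v \<le> D \<and> ((u=0 \<and> v\<noteq>0) \<or> (v=0 \<and> u\<noteq>0))"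
  by (auto simp: sym_arcs_def star_edge_def)

lemma centre_fixed:
  assumes "D \<ge> 2" "is_digraph_aut {0..D} star_edge \<sigma>"
  shows "\<sigma> 0 = 0"
proof (rule ccontr)
  assume ne: "\<sigma> 0 \<noteq> 0"
  have bij: "bij_betw \<sigma> {0..D} {0..D}" and pres: "\<forall>u\<in>{0..D}. \<forall>v\<in>{0..D}. (u, v) \<in> sym_arcs {0..D} star_edge \<longleftrightarrow> (\<sigma> u, \<sigma> v) \<in> sym_arcs {0..D} star_edge"
    using assms(2) unfolding is_digraph_aut_def by auto
  have "(0,1) \<in> sym_arcs {0..D} star_edge" "(0,2) \<in> sym_arcs {0..D} star_edge"
    using assms(1) by (auto simp: arcs_eq)
  then have "(\<sigma> 0, \<sigma> 1) \<in> sym_arcs {0..D} star_edge" "(\<sigma> 0, \<sigma> 2) \<in> sym_arcs {0..D} star_edge"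
    using pres assms(1) by auto
  then have "\<sigma> 1 = 0" "\<sigma> 2 = 0" using ne by (auto simp: arcs_eq)
  moreover have "inj_on \<sigma> {0..D}" using bij bij_betw_def by blast
  ultimately show False using assms(1) unfolding inj_on_def
    by (metis atLeastAtMost_iff le0 le_trans one_le_numeral num.distinct(1) numeral_eq_one_iff)
qed

lemma lower:
  fixes c :: "nat \<times> nat \<Rightarrow> nat"
  assumes D: "D \<ge> 4"
    and col: "\<forall>a\<in>sym_arcs {0..D} star_edge. c a < k"
    and nm: "no_mono_2path {0..D} star_edge c"
    and di: "distinguishing_arc_col {0..D} star_edge c"
  shows "4 * D \<le> k^2"
proof -
  define L where "L = {1..D}"
  define f where "f i = c (i,0)" for i
  define g where "g i = c (0,i)" for i
  define I where "I = f ` L"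
  define Ou where "Ou = g ` L"
  have key: "i = j" if "i \<in> L" "j \<in> L" "f i = g j" for i j
  proof (rule ccontr)
    assume "i \<noteq> j"
    then have "c (i,0) \<noteq> c (0,j)" using nm that(1,2) unfolding no_mono_2path_def
      by (auto simp: arcs_eq L_def)
    then show False using that(3) by (simp add: f_def g_def)
  qed
  have injp: "inj_on (\<lambda>i. (f i, g i)) L"
  proof (rule inj_onI, rule ccontr)
    fix i j assume ij: "i \<in> L" "j \<in> L" "(f i, g i) = (f j, g j)" "i \<noteq> j"
    define \<sigma> where "\<sigma> x = (if x = i then j else if x = j then i else x)" for x
    have ijD: "i \<le> D" "j \<le> D" "i \<noteq> 0" "j \<noteq> 0" using ij by (auto simp: L_def)
    have s0: "\<sigma> 0 = 0" using ijD by (simp add: \<sigma>_def)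
    have inv: "\<sigma> (\<sigma> x) = x" for x by (auto simp: \<sigma>_def)
    have sV: "\<sigma> x \<in> {0..D} \<longleftrightarrow> x \<in> {0..D}" for x using ijD by (auto simp: \<sigma>_def)
    have snz: "\<sigma> x = 0 \<longleftrightarrow> x = 0" for x using ijD by (auto simp: \<sigma>_def)
    have bij: "bij_betw \<sigma> {0..D} {0..D}"
      by (rule bij_betw_byWitness[where f'=\<sigma>]) (use sV inv in auto)
    have aut: "is_digraph_aut {0..D} star_edge \<sigma>"
      unfolding is_digraph_aut_def using bij snz sV by (auto simp: arcs_eq)
    have pc: "\<forall>a\<in>sym_arcs {0..D} star_edge. c (\<sigma> (fst a), \<sigma> (snd a)) = c a"
    proof
      fix a assume "a \<in> sym_arcs {0..D} star_edge"
      then obtain u v where a: "a = (u,v)" "(u = 0 \<and> v \<noteq> 0) \<or> (v = 0 \<and> u \<noteq> 0)"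
        by (cases a) (auto simp: arcs_eq)
      show "c (\<sigma> (fst a), \<sigma> (snd a)) = c a"
        using a ij(3) s0 unfolding f_def g_def by (auto simp: \<sigma>_def)
    qed
    have "\<sigma> i = i" using di aut pc ijD unfolding distinguishing_arc_col_def by auto
    then show False using ij(4) by (simp add: \<sigma>_def)
  qed
  define L1 where "L1 = {i\<in>L. f i \<in> Ou}"
  define L2 where "L2 = L - L1"
  have finL: "finite L" by (simp add: L_def)
  have cardL: "card L = D" by (simp add: L_def)
  have L1L: "L1 \<subseteq> L" by (auto simp: L1_def)
  have finIO: "finite I" "finite Ou" using finL by (auto simp: I_def Ou_def)
  have injf: "inj_on f L1"
  proof (rule inj_onI)
    fix i j assume ij: "i \<in> L1" "j \<in> L1" "f i = f j"
    then obtain j' where j': "j' \<in> L" "f j = g j'" by (auto simp: L1_def Ou_def)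
    have "j = j'" using key[of j j'] j' ij(2) by (auto simp: L1_def)
    moreover have "i = j'" using key[of i j'] j' ij by (auto simp: L1_def)
    ultimately show "i = j" by simp
  qed
  have "f ` L1 \<subseteq> I \<inter> Ou" by (auto simp: L1_def I_def)
  then have "card (f ` L1) \<le> card (I \<inter> Ou)" using finIO by (intro card_mono) auto
  then have c1: "card L1 \<le> card (I \<inter> Ou)" using card_image[OF injf] by simp
  have sub2: "(\<lambda>i. (f i, g i)) ` L2 \<subseteq> (I - Ou) \<times> (Ou - I)"
  proof
    fix x assume "x \<in> (\<lambda>i. (f i, g i)) ` L2"
    then obtain i where i: "i \<in> L2" "x = (f i, g i)" by auto
    have fi: "f i \<notin> Ou" and iL: "i \<in> L" using i by (auto simp: L1_def L2_def)
    moreover have "g i \<notin> I"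
    proof
      assume "g i \<in> I"
      then obtain j where j: "j \<in> L" "f j = g i" by (auto simp: I_def)
      then have "j = i" using key iL by blast
      then show False using j fi iL by (auto simp: Ou_def)
    qed
    ultimately show "x \<in> (I - Ou) \<times> (Ou - I)" using i by (auto simp: I_def Ou_def)
  qed
  have inj2: "inj_on (\<lambda>i. (f i, g i)) L2" using injp by (rule inj_on_subset) (auto simp: L2_def)
  have "card ((\<lambda>i. (f i, g i)) ` L2) \<le> card ((I - Ou) \<times> (Ou - I))"
    using finIO sub2 by (intro card_mono) auto
  then have c2: "card L2 \<le> card (I - Ou) * card (Ou - I)"
    using card_image[OF inj2] by (simp add: card_cartesian_product)
  have cL: "card L = card L1 + card L2"
    unfolding L2_def using finL L1L by (simp add: card_Diff_subset card_mono finite_subset)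
  have "I \<union> Ou \<subseteq> {0..<k}"
    using col by (auto simp: I_def Ou_def L_def f_def g_def arcs_eq)
  then have "card (I \<union> Ou) \<le> card {0..<k}" by (intro card_mono) auto
  then have cu: "card (I \<union> Ou) \<le> k" by simp
  have cU: "card (I \<union> Ou) = card (I \<inter> Ou) + card (I - Ou) + card (Ou - I)"
  proof -
    have e: "I \<union> Ou = ((I \<inter> Ou) \<union> (I - Ou)) \<union> (Ou - I)" by auto
    have "card (((I \<inter> Ou) \<union> (I - Ou)) \<union> (Ou - I)) = card ((I \<inter> Ou) \<union> (I - Ou)) + card (Ou - I)"
      using finIO by (intro card_Un_disjoint) auto
    moreover have "card ((I \<inter> Ou) \<union> (I - Ou)) = card (I \<inter> Ou) + card (I - Ou)"
      using finIO by (intro card_Un_disjoint) auto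
    ultimately show ?thesis using e by simp
  qed
  define s where "s = card (I \<inter> Ou)"
  define p where "p = card (I - Ou)"
  define q where "q = card (Ou - I)"
  have spq: "s + p + q \<le> k" "D \<le> s + p * q"
    using cu cU c1 c2 cL cardL unfolding s_def p_def q_def by linarith+
  show ?thesis
  proof (cases "s + 2*(p+q) \<ge> 4")
    case True
    have a: "4*(p*q) \<le> (p+q)^2"
    proof -
      have "int (4*(p*q)) \<le> int ((p+q)^2)"
        using zero_le_power2[of "int p - int q"] by (simp add: power2_eq_square algebra_simps)
      then show ?thesis by linarith
    qed
    have b: "4*s \<le> s*s + 2*s*(p+q)"
      using True mult_le_mono2[OF True, of s] by (simp add: algebra_simps)
    have "4*D \<le> 4*s + 4*(p*q)" using spq by linarith
    also have "\<dots> \<le> (s+p+q)^2" using a b by (simp add: power2_eq_square algebra_simps)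
    also have "\<dots> \<le> k^2" using spq by (simp add: power_mono)
    finally show ?thesis .
  next
    case False
    then have "p*q = 0" "s \<le> 3" by auto
    then show ?thesis using spq D by linarith
  qed
qed


lemma upper:
  assumes D: "D \<ge> 4" and a: "a > 0" and ab: "D \<le> a * b"
  shows "\<exists>c :: nat \<times> nat \<Rightarrow> nat. (\<forall>x\<in>sym_arcs {0..D} star_edge. c x < a + b)
     \<and> no_mono_2path {0..D} star_edge c \<and> distinguishing_arc_col {0..D} star_edge c"
proof -
  define c :: "nat \<times> nat \<Rightarrow> nat" where
    "c = (\<lambda>(u,v). if v = 0 then (u - 1) mod a else a + (v - 1) div a)"
  have c0: "c (u,0) = (u - 1) mod a" for u by (simp add: c_def)
  have c1: "v \<noteq> 0 \<Longrightarrow> c (u,v) = a + (v - 1) div a" for u v by (simp add: c_def)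
  have dv: "(v - 1) div a < b" if "v \<le> D" "v \<noteq> 0" for v
  proof -
    have "v - 1 < b * a" using that ab by (simp add: mult.commute)
    then show ?thesis by (simp add: less_mult_imp_div_less)
  qed
  have col: "\<forall>x\<in>sym_arcs {0..D} star_edge. c x < a + b"
  proof
    fix x assume "x \<in> sym_arcs {0..D} star_edge"
    then obtain u v where x: "x = (u,v)" "u \<le> D" "v \<le> D" "(u=0 \<and> v\<noteq>0) \<or> (v=0 \<and> u\<noteq>0)"
      by (cases x) (auto simp: arcs_eq)
    then show "c x < a + b"
    proof (cases "v = 0")
      case True
      then show ?thesis using x a by (simp add: c0 trans_less_add1)
    next
      case False
      then show ?thesis using x dv c1 by simp
    qed
  qed
  have nm: "no_mono_2path {0..D} star_edge c"
    unfolding no_mono_2path_def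
  proof (intro allI impI)
    fix u v w assume h: "(u, v) \<in> sym_arcs {0..D} star_edge \<and> (v, w) \<in> sym_arcs {0..D} star_edge \<and> w \<noteq> u"
    then have "v = 0" "w \<noteq> 0" by (auto simp: arcs_eq)
    moreover have "(u - 1) mod a < a" using a by simp
    ultimately show "c (u, v) \<noteq> c (v, w)" by (simp add: c0 c1)
  qed
  have di: "distinguishing_arc_col {0..D} star_edge c"
    unfolding distinguishing_arc_col_def
  proof (intro allI impI ballI)
    fix \<sigma> v assume h: "is_digraph_aut {0..D} star_edge \<sigma> \<and>
         (\<forall>x\<in>sym_arcs {0..D} star_edge. c (\<sigma> (fst x), \<sigma> (snd x)) = c x)" and v: "v \<in> {0..D}"
    have s0: "\<sigma> 0 = 0" using centre_fixed[of D \<sigma>] D h by auto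
    have bij: "bij_betw \<sigma> {0..D} {0..D}" using h by (simp add: is_digraph_aut_def)
    show "\<sigma> v = v"
    proof (cases "v = 0")
      case True then show ?thesis using s0 by simp
    next
      case False
      have sv: "\<sigma> v \<in> {0..D}" using bij v bij_betwE by blast
      have "\<sigma> v \<noteq> 0"
      proof
        assume "\<sigma> v = 0"
        then have "\<sigma> v = \<sigma> 0" using s0 by simp
        then have "v = 0" using bij v unfolding bij_betw_def inj_on_def by auto
        then show False using False by simp
      qed
      have a1: "(v,0) \<in> sym_arcs {0..D} star_edge" "(0,v) \<in> sym_arcs {0..D} star_edge"
        using v False by (auto simp: arcs_eq)
      have "c (\<sigma> v, 0) = c (v, 0)" using h a1(1) s0 by force
      then have m: "(\<sigma> v - 1) mod a = (v - 1) mod a" by (simp add: c0)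
      have "c (0, \<sigma> v) = c (0, v)" using h a1(2) s0 by force
      then have d: "(\<sigma> v - 1) div a = (v - 1) div a" using \<open>\<sigma> v \<noteq> 0\<close> False by (simp add: c1)
      have "\<sigma> v - 1 = v - 1" using m d by (metis div_mult_mod_eq)
      then show ?thesis using \<open>\<sigma> v \<noteq> 0\<close> False by simp
    qed
  qed
  show ?thesis using col nm di by blast
qed

theorem mainTheorem8:
  fixes \<Delta> :: nat
  assumes "\<Delta> \<ge> 4"
  shows "chi_D2 (star_vertices \<Delta>) star_edge = nat \<lceil>2 * sqrt (real \<Delta>)\<rceil>"
proof -
  define K where "K = nat \<lceil>2 * sqrt (real \<Delta>)\<rceil>"
  have sq: "(2 * sqrt (real \<Delta>))^2 = 4 * real \<Delta>" by (simp add: power_mult_distrib)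
  have KR: "real K \<ge> 2 * sqrt (real \<Delta>)" unfolding K_def
    by (metis ceiling_correct le_nat_iff of_int_of_nat_eq of_nat_le_iff order.trans le_of_int_ceiling nat_0_le ceiling_le_zero not_le of_nat_0_le_iff linear)
  have "(2 * sqrt (real \<Delta>))^2 \<le> (real K)^2" using KR by (intro power_mono) auto
  then have "4 * real \<Delta> \<le> real (K^2)" using sq by simp
  then have K2: "4 * \<Delta> \<le> K^2" by linarith
  have K4: "K \<ge> 4"
  proof (rule ccontr)
    assume "\<not> K \<ge> 4"
    then have "K^2 \<le> 3^2" by (intro power_mono) auto
    then show False using K2 assms by simp
  qed
  define a where "a = K div 2"
  define b where "b = K - a"
  have abK: "a + b = K" by (simp add: a_def b_def)
  have a0: "a > 0" using K4 by (simp add: a_def)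
  have "4 * (a * b) + 1 \<ge> K^2"
  proof (cases "even K")
    case True
    then obtain m where "K = 2*m" by blast
    then show ?thesis by (simp add: a_def b_def power2_eq_square)
  next
    case False
    then obtain m where "K = 2*m + 1" using oddE by blast
    then show ?thesis by (simp add: a_def b_def power2_eq_square algebra_simps)
  qed
  then have ab: "\<Delta> \<le> a * b" using K2 by linarith
  let ?P = "\<lambda>k. \<exists>c :: nat \<times> nat \<Rightarrow> nat.
      (\<forall>x\<in>sym_arcs (star_vertices \<Delta>) star_edge. c x < k) \<and> no_mono_2path (star_vertices \<Delta>) star_edge c
       \<and> distinguishing_arc_col (star_vertices \<Delta>) star_edge c"
  have PK: "?P K" using upper[OF assms a0 ab] abK by (simp add: star_vertices_def)
  have least: "K \<le> k" if Pk: "?P k" for k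
  proof -
    obtain c :: "nat \<times> nat \<Rightarrow> nat" where "(\<forall>x\<in>sym_arcs {0..\<Delta>} star_edge. c x < k)"
      "no_mono_2path {0..\<Delta>} star_edge c" "distinguishing_arc_col {0..\<Delta>} star_edge c"
      using Pk unfolding star_vertices_def by blast
    then have k2: "4 * \<Delta> \<le> k^2" using lower[OF assms] by blast
    have "sqrt (4 * real \<Delta>) \<le> sqrt ((real k)^2)"
      using k2 by (intro real_sqrt_le_mono) (metis of_nat_le_iff of_nat_mult of_nat_numeral of_nat_power)
    moreover have "sqrt (4 * real \<Delta>) = 2 * sqrt (real \<Delta>)" by (simp add: real_sqrt_mult)
    ultimately have "2 * sqrt (real \<Delta>) \<le> real k" by simp
    then have "\<lceil>2 * sqrt (real \<Delta>)\<rceil> \<le> int k" by (intro ceiling_le) simp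
    then show ?thesis unfolding K_def by (simp only: nat_le_iff)
  qed
  have "chi_D2 (star_vertices \<Delta>) star_edge = K"
    unfolding chi_D2_def by (rule Least_equality[where P="?P"]) (use PK least in auto)
  then show ?thesis by (simp add: K_def)
qed

end
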